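(* Let $\nu,b,c,t$ be positive integers with $2\nu\ge 2b+c+1$, $\nu>b\ge t+1$ and $c\ge t$. For $x\in\{t,t+1,\dots,b\}$ let $$g_{b,c}(x)={x\brack t}{c-t+1\brack 1}^{x-t}N'(x;b;2\nu).$$ Then $g_{b,c}(x+1)<g_{b,c}(x)$ for every $x\in\{t,\dots,b-1\}$, i.e. $g_{b,c}$ is strictly decreasing on $\{t,\dots,b\}$.
   Context: $q$ is a prime power. Gaussian binomial coefficient: ${n\brack k}=\prod_{i=0}^{k-1}\frac{q^{n-i}-1}{q^{k-i}-1}$, ${n\brack 0}=1$. For integers $0\le a\le m\le\nu$, $N'(a;m;2\nu)=\prod_{i=1}^{m-a}\frac{q^{2(\nu-m+i)}-1}{q^{i}-1}$. *)

theory Defs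
  imports Complex_Main "HOL-Computational_Algebra.Primes"
begin

definition prime_power :: "nat \<Rightarrow> bool" where
  "prime_power q \<longleftrightarrow> (\<exists>p k. prime p \<and> k > 0 \<and> q = p ^ k)"

definition gauss_binom :: "nat \<Rightarrow> nat \<Rightarrow> nat \<Rightarrow> real" where
  "gauss_binom q n k = (\<Prod>i<k. (real q ^ (n - i) - 1) / (real q ^ (k - i) - 1))"

definition Nprime :: "nat \<Rightarrow> nat \<Rightarrow> nat \<Rightarrow> nat \<Rightarrow> real" where
  "Nprime q a m \<nu> = (\<Prod>i=1..m-a. (real q ^ (2 * (\<nu> - m + i)) - 1) / (real q ^ i - 1))"

definition g_bc :: "nat \<Rightarrow> nat \<Rightarrow> nat \<Rightarrow> nat \<Rightarrow> nat \<Rightarrow> nat \<Rightarrow> real" where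
  "g_bc q \<nu> t b c x = gauss_binom q x t * gauss_binom q (c - t + 1) 1 ^ (x - t) * Nprime q x b \<nu>"

end

theory Submission
  imports Defs
begin

lemma key:
  fixes Q :: real and a t n m E :: nat
  assumes Q: "Q \<ge> 2" and a: "a \<ge> 1" and n: "n \<ge> 1" and m: "m \<ge> 1" and mE: "m \<le> E"
    and tE: "t + n + m + 1 \<le> E"
  shows "(Q^(a+t)-1)*(Q^n-1)*(Q^m-1) < (Q^a-1)*(Q-1)*(Q^E-1)"
proof -
  have pge: "\<And>k. k \<ge> 1 \<Longrightarrow> Q^k \<ge> Q" using Q
    by (metis le_add_diff_inverse less_le_trans numeral_le_one_iff power_increasing power_one_right semiring_norm(69) linorder_not_le one_le_numeral order.trans)
  have qa: "Q^a \<ge> 2" using pge[OF a] Q by linarith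
  have qn: "Q^n \<ge> 2" using pge[OF n] Q by linarith
  have qm: "Q^m \<ge> 2" using pge[OF m] Q by linarith
  have qt: "Q^t \<ge> 1" using Q by simp
  have h1: "Q^(a+t)-1 < 2*Q^t*(Q^a-1)"
  proof -
    have "Q^(a+t) = Q^a*Q^t" by (simp add: power_add)
    moreover have "Q^a*Q^t \<ge> 2*Q^t" using qa qt by (simp add: mult_right_mono)
    ultimately show ?thesis using qt by (simp add: algebra_simps, linarith)
  qed
  have h2: "Q^n-1 < Q^n*(Q-1)" using qn Q
    by (smt (verit) mult_le_cancel_left1)
  have qE: "Q^m \<le> Q^E" using Q mE by (simp add: power_increasing)
  have h3: "(Q^m-1)*Q^E \<le> Q^m*(Q^E-1)" using qE by (simp add: algebra_simps)
  have h4: "2*Q^(t+n+m) \<le> Q^E"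
  proof -
    have "2*Q^(t+n+m) \<le> Q*Q^(t+n+m)" using Q by (simp add: mult_right_mono)
    also have "\<dots> = Q^(t+n+m+1)" by simp
    also have "\<dots> \<le> Q^E" using Q tE by (intro power_increasing) auto
    finally show ?thesis .
  qed
  have pE: "Q^E > 0" using Q by simp
  have p1: "Q^(a+t)-1 > 0"
  proof -
    have "Q^(a+t) \<ge> Q" using pge[of "a+t"] a by simp
    then show ?thesis using Q by linarith
  qed
  have p2: "Q^n-1 > 0" using qn by linarith
  have p3: "Q^m*(Q^E-1) > 0" using qm qE by simp
  have s1: "(Q^(a+t)-1)*(Q^n-1)*((Q^m-1)*Q^E) \<le> (Q^(a+t)-1)*(Q^n-1)*(Q^m*(Q^E-1))"
    by (rule mult_left_mono[OF h3]) (use p1 p2 in simp)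
  have s2a: "(Q^(a+t)-1)*(Q^n-1) < (2*Q^t*(Q^a-1))*(Q^n*(Q-1))"
    by (rule mult_strict_mono[OF h1 h2]) (use qt qa qn p1 in auto)
  have s2: "(Q^(a+t)-1)*(Q^n-1)*(Q^m*(Q^E-1)) < (2*Q^t*(Q^a-1))*(Q^n*(Q-1))*(Q^m*(Q^E-1))"
    using s2a p3 by (rule mult_strict_right_mono)
  have s3: "(2*Q^t*(Q^a-1))*(Q^n*(Q-1))*(Q^m*(Q^E-1)) = (2*Q^(t+n+m))*((Q^a-1)*(Q-1)*(Q^E-1))"
    by (simp only: power_add mult_ac)
  have s4: "(2*Q^(t+n+m))*((Q^a-1)*(Q-1)*(Q^E-1)) \<le> Q^E*((Q^a-1)*(Q-1)*(Q^E-1))"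
    by (rule mult_right_mono[OF h4]) (use qa Q qE qm in simp)
  have "((Q^(a+t)-1)*(Q^n-1)*(Q^m-1))*Q^E < ((Q^a-1)*(Q-1)*(Q^E-1))*Q^E"
  proof -
    have e1: "((Q^(a+t)-1)*(Q^n-1)*(Q^m-1))*Q^E = (Q^(a+t)-1)*(Q^n-1)*((Q^m-1)*Q^E)" by (simp only: mult.assoc)
    have e2: "((Q^a-1)*(Q-1)*(Q^E-1))*Q^E = Q^E*((Q^a-1)*(Q-1)*(Q^E-1))" by (rule mult.commute)
    show ?thesis unfolding e1 e2 using s1 s2 s3 s4 by linarith
  qed
  then show ?thesis by (rule mult_right_less_imp_less[OF _ less_imp_le[OF pE]])
qed

lemma powm1_pos: fixes Q :: real assumes "Q \<ge> 2" "k \<ge> 1" shows "Q^k - 1 > 0"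
proof -
  have "Q^k \<ge> Q^1" using assms by (intro power_increasing) auto
  then show ?thesis using assms by simp
qed

lemma gb_step:
  assumes Q: "real q \<ge> 2" and tx: "t \<le> x"
  shows "gauss_binom q (x+1) t * (real q^(x+1-t)-1) = gauss_binom q x t * (real q^(x+1)-1)"
proof -
  define f where "f k = real q ^ k - 1" for k
  define D where "D = (\<Prod>i<t. f (t - i))"
  have g1: "gauss_binom q (x+1) t = (\<Prod>i<t. f (x+1-i)) / D"
    unfolding gauss_binom_def D_def f_def by (simp add: prod_dividef)
  have g0: "gauss_binom q x t = (\<Prod>i<t. f (x-i)) / D"
    unfolding gauss_binom_def D_def f_def by (simp add: prod_dividef)
  have a: "(\<Prod>i<Suc t. f (x+1-i)) = (\<Prod>i<t. f (x+1-i)) * f (x+1-t)"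
    by (simp add: prod.lessThan_Suc)
  have b: "(\<Prod>i<Suc t. f (x+1-i)) = f (x+1) * (\<Prod>i<t. f (x-i))"
    by (subst prod.lessThan_Suc_shift) simp
  show ?thesis unfolding g1 g0 using a b unfolding f_def[symmetric] by (simp add: field_simps)
qed

lemma gb_pos:
  assumes Q: "real q \<ge> 2" and tx: "t \<le> x"
  shows "gauss_binom q x t > 0"
  unfolding gauss_binom_def
  by (rule prod_pos) (use Q tx in \<open>auto intro!: divide_pos_pos powm1_pos\<close>)

lemma np_pos:
  assumes Q: "real q \<ge> 2"
  shows "Nprime q a m \<nu> > 0"
  unfolding Nprime_def
  by (rule prod_pos) (use Q in \<open>auto intro!: divide_pos_pos powm1_pos\<close>)

lemma np_step:
  assumes xb: "x < b" and bn: "b \<le> \<nu>"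
  shows "Nprime q x b \<nu> = Nprime q (x+1) b \<nu> * ((real q^(2*(\<nu>-x))-1)/(real q^(b-x)-1))"
proof -
  have e: "b - x = Suc (b - (x+1))" using xb by simp
  have e2: "\<nu> - b + Suc (b - (x+1)) = \<nu> - x" using xb bn by simp
  define h where "h i = (real q ^ (2 * (\<nu> - b + i)) - 1) / (real q ^ i - 1)" for i
  have "Nprime q x b \<nu> = prod h {1..Suc (b - (x+1))}" unfolding Nprime_def h_def e ..
  also have "\<dots> = prod h {1..b - (x+1)} * h (Suc (b - (x+1)))" by (subst prod.cl_ivl_Suc) simp
  also have "prod h {1..b - (x+1)} = Nprime q (x+1) b \<nu>" unfolding Nprime_def h_def ..
  also have "h (Suc (b - (x+1))) = (real q^(2*(\<nu>-x))-1)/(real q^(b-x)-1)" unfolding h_def e[symmetric] using xb bn by (simp add: Suc_diff_Suc)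
  finally show ?thesis .
qed

lemma core_alg:
  fixes A0 F1 F2 F3 D1 W FE :: real
  assumes k: "F1*F2*F3 < D1*W*FE" and A0: "A0 > 0" and D1: "D1 > 0" and F3: "F3 > 0" and W: "W > 0"
  shows "A0*F1/D1*(F2/W) < A0*(FE/F3)"
proof -
  have "F1*F2/(D1*W) < FE/F3"
    using k D1 F3 W by (simp add: divide_simps mult_ac)
  then have h: "A0*(F1*F2/(D1*W)) < A0*(FE/F3)" using A0 by (rule mult_strict_left_mono)
  have e: "A0*F1/D1*(F2/W) = A0*(F1*F2/(D1*W))" by simp
  show ?thesis unfolding e by (rule h)
qed

theorem lemma3p1:
  fixes q \<nu> b c t x :: nat
  assumes "prime_power q"
    and "\<nu> > 0" and "b > 0" and "c > 0" and "t > 0"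
    and "2 * \<nu> \<ge> 2 * b + c + 1"
    and "\<nu> > b" and "b \<ge> t + 1" and "c \<ge> t"
    and "t \<le> x" and "x \<le> b - 1"
  shows "g_bc q \<nu> t b c (x + 1) < g_bc q \<nu> t b c x"
proof -
  obtain p k where pk: "prime p" "k > 0" "q = p ^ k" using assms(1) unfolding prime_power_def by blast
  have "p \<ge> 2" using pk(1) prime_ge_2_nat by blast
  moreover have "p \<le> p ^ k" by (rule self_le_power) (use \<open>p \<ge> 2\<close> pk(2) in auto)
  ultimately have "q \<ge> 2" using pk(3) by linarith
  then have Q: "real q \<ge> 2" by simp
  define Q' where "Q' = real q"
  define G where "G = gauss_binom q (c - t + 1) 1"
  define A0 where "A0 = gauss_binom q x t"
  define A1 where "A1 = gauss_binom q (x+1) t"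
  define N1 where "N1 = Nprime q (x+1) b \<nu>"
  define E where "E = 2*(\<nu>-x)"
  have xb: "x < b" using assms by linarith
  have GG: "G = (Q'^(c-t+1) - 1)/(Q' - 1)" unfolding G_def gauss_binom_def Q'_def by simp
  have A1e: "A1 * (Q'^(x+1-t)-1) = A0 * (Q'^(x+1)-1)"
    unfolding A1_def A0_def Q'_def using gb_step[OF Q assms(10)] by simp
  have N0: "Nprime q x b \<nu> = N1 * ((Q'^E-1)/(Q'^(b-x)-1))"
    unfolding N1_def E_def Q'_def using np_step[OF xb] assms(7) by simp
  have A0p: "A0 > 0" unfolding A0_def using gb_pos[OF Q assms(10)] .
  have N1p: "N1 > 0" unfolding N1_def using np_pos[OF Q] .
  have Q2: "Q' \<ge> 2" using Q Q'_def by simp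
  have D1p: "Q'^(x+1-t)-1 > 0" using powm1_pos[OF Q2] assms(10) by simp
  have F3p: "Q'^(b-x)-1 > 0" using powm1_pos[OF Q2] xb by simp
  have F2p: "Q'^(c-t+1)-1 > 0" using powm1_pos[OF Q2, of "c-t+1"] by simp
  have Gp: "G > 0" unfolding GG using F2p Q2 by simp
  have key': "(Q'^((x+1-t)+t)-1)*(Q'^(c-t+1)-1)*(Q'^(b-x)-1) < (Q'^(x+1-t)-1)*(Q'-1)*(Q'^E-1)"
  proof (rule key[OF Q2])
    show "1 \<le> x+1-t" using assms(10) by linarith
    show "1 \<le> c-t+1" by linarith
    show "1 \<le> b-x" using xb by linarith
    show "b-x \<le> E" unfolding E_def using xb assms(7) by linarith
    show "t + (c-t+1) + (b-x) + 1 \<le> E" unfolding E_def using xb assms(6,7,9,11) by linarith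
  qed
  have xt: "x+1-t+t = x+1" using assms(10) by linarith
  have A1v: "A1 = A0 * (Q'^(x+1)-1) / (Q'^(x+1-t)-1)" using A1e D1p by (simp add: field_simps)
  have core: "A1 * G < A0 * ((Q'^E-1)/(Q'^(b-x)-1))"
    unfolding A1v GG by (rule core_alg[OF key'[unfolded xt] A0p D1p F3p]) (use Q2 in simp)
  have pw: "G^(x+1-t) = G^(x-t) * G" using assms(10) by (simp add: Suc_diff_le)
  have "g_bc q \<nu> t b c (x + 1) = (A1 * G) * (G^(x-t) * N1)"
    unfolding g_bc_def A1_def[symmetric] G_def[symmetric] N1_def[symmetric] pw by (simp only: mult_ac)
  also have "\<dots> < (A0 * ((Q'^E-1)/(Q'^(b-x)-1))) * (G^(x-t) * N1)"
    by (rule mult_strict_right_mono[OF core]) (use Gp N1p in simp)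
  also have "\<dots> = g_bc q \<nu> t b c x"
    unfolding g_bc_def A0_def[symmetric] G_def[symmetric] N0 by (simp only: mult_ac)
  finally show ?thesis .
qed

end
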